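(* Assume (V1), (V2), (V3), and (In), and let $\delta>0$. Then for every $n$ and all $t,s\ge\delta$, $$\int_0^L|\check\rho^n(t,z)-\check\rho^n(s,z)|\,dz\le R^2\big[C_\delta+(v_{\max}-v(R))\big]|t-s|,$$ where $C_\delta:=3(v_{\max}-v(R))+2(\bar x_{\max}-\bar x_{\min})/\delta$.
   Context: (V1): $v\in C^1([0,\infty))$ strictly decreasing; (V2): $v(0)=v_{\max}\in\mathbb{R}$; (V3): $\rho\mapsto\rho\,v'(\rho)$ is non-increasing on $[0,\infty)$. $\mathcal{M}_L$: nonnegative compactly supported Radon measures on $\mathbb{R}$ of mass $L>0$. (In): $\bar\rho\in\mathcal{M}_L\cap L^\infty(\mathbb{R})$; $R:=\|\bar\rho\|_{L^\infty}$; $[\bar x_{\min},\bar x_{\max}]$ smallest closed interval containing $\mathrm{supp}\,\bar\rho$. For $n\in\mathbb{N}$: $N_n=2^n$, $\ell_n=2^{-n}L$, $\bar x^n_0=\bar x_{\min}$, $\bar x^n_i=\sup\{x:\int_{\bar x^n_{i-1}}^x\bar\rho<\ell_n\}$; $(x^n_i(t))$ solves $\dot x^n_{N_n}=v_{\max}$, $\dot x^n_i=v(\ell_n/(x^n_{i+1}-x^n_i))$, $x^n_i(0)=\bar x^n_i$; $y^n_i:=\ell_n/(x^n_{i+1}-x^n_i)$; $\check\rho^n(t,z):=\sum_{i=0}^{N_n-1}y^n_i(t)\chi_{[i\ell_n,(i+1)\ell_n)}(z)$, $z\in[0,L]$. *)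

theory Defs
  imports "HOL-Analysis.Analysis" "HOL-Probability.Essential_Supremum"
begin

definition msupp :: "(real \<Rightarrow> real) \<Rightarrow> real set" where
  "msupp rho = {x. \<forall>e>0. (LINT y:{x-e..x+e}|lborel. rho y) > 0}"

definition Linf_norm :: "(real \<Rightarrow> real) \<Rightarrow> real" where
  "Linf_norm rho = real_of_ereal (esssup lborel (\<lambda>x. ereal \<bar>rho x\<bar>))"

definition xbar_min :: "(real \<Rightarrow> real) \<Rightarrow> real" where
  "xbar_min rho = Inf (msupp rho)"

definition xbar_max :: "(real \<Rightarrow> real) \<Rightarrow> real" where
  "xbar_max rho = Sup (msupp rho)"

text \<open>Number of particles N_n = 2^n and mass per particle l_n = 2^(-n) L.\<close>
definition Nn :: "nat \<Rightarrow> nat" where "Nn n = 2 ^ n"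
definition elln :: "real \<Rightarrow> nat \<Rightarrow> real" where "elln L n = L / 2 ^ n"

fun xbar :: "(real \<Rightarrow> real) \<Rightarrow> real \<Rightarrow> nat \<Rightarrow> nat \<Rightarrow> real" where
  "xbar rho L n 0 = xbar_min rho"
| "xbar rho L n (Suc i) =
     Sup {x. (LINT y:{xbar rho L n i..x}|lborel. rho y) < elln L n}"

text \<open>(x_i)_{i=0..N_n} is a (global, forward-in-time) solution of the
  follow-the-leader system with the given initial data; solutions keep
  the particles strictly ordered so that the densities y_i are defined.\<close>
definition ftl_solution ::
  "(real \<Rightarrow> real) \<Rightarrow> (real \<Rightarrow> real) \<Rightarrow> real \<Rightarrow> nat \<Rightarrow> (nat \<Rightarrow> real \<Rightarrow> real) \<Rightarrow> bool" where
  "ftl_solution v rho L n x \<longleftrightarrow>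
     (\<forall>i\<le>Nn n. x i 0 = xbar rho L n i) \<and>
     (\<forall>t\<ge>0. \<forall>i<Nn n. x i t < x (Suc i) t) \<and>
     (\<forall>t\<ge>0. (x (Nn n) has_real_derivative v 0) (at t within {0..})) \<and>
     (\<forall>t\<ge>0. \<forall>i<Nn n.
        (x i has_real_derivative v (elln L n / (x (Suc i) t - x i t))) (at t within {0..}))"

definition ydens :: "real \<Rightarrow> nat \<Rightarrow> (nat \<Rightarrow> real \<Rightarrow> real) \<Rightarrow> nat \<Rightarrow> real \<Rightarrow> real" where
  "ydens L n x i t = elln L n / (x (Suc i) t - x i t)"

definition rho_check :: "real \<Rightarrow> nat \<Rightarrow> (nat \<Rightarrow> real \<Rightarrow> real) \<Rightarrow> real \<Rightarrow> real \<Rightarrow> real" where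
  "rho_check L n x t z =
     (\<Sum>i<Nn n. ydens L n x i t *
        indicator {real i * elln L n ..< real (Suc i) * elln L n} z)"

end

theory Submission
  imports Defs
begin


lemma maxprinc:
  fixes f D :: "'i \<Rightarrow> real \<Rightarrow> real" and I :: "'i set"
  assumes finI: "finite I"
    and deriv: "\<And>i t. i\<in>I \<Longrightarrow> a \<le> t \<Longrightarrow> t \<le> b \<Longrightarrow> (f i has_real_derivative D i t) (at t within {a..})"
    and crit: "\<And>i t. i\<in>I \<Longrightarrow> a \<le> t \<Longrightarrow> t < b \<Longrightarrow> (\<forall>j\<in>I. f j t \<le> f i t) \<Longrightarrow> f i t \<ge> c \<Longrightarrow> D i t \<le> 0"
    and init: "\<And>i. i\<in>I \<Longrightarrow> f i a \<le> c"
    and T: "a \<le> T" "T \<le> b" and i0: "i0 \<in> I"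
  shows "f i0 T \<le> c"
proof (rule ccontr)
  assume "\<not> f i0 T \<le> c"
  hence big: "f i0 T > c" by simp
  with init[OF i0] have "T \<noteq> a" by auto
  with T have Ta: "T > a" by simp
  define e where "e = (f i0 T - c) / (2 * (T - a))"
  have e: "e > 0" using big Ta by (simp add: e_def)
  have eT: "c + e * (T - a) < f i0 T"
  proof -
    have "e * (T - a) = (f i0 T - c) / 2" using Ta by (simp add: e_def field_simps)
    thus ?thesis using big by simp
  qed
  have cont: "continuous_on {a..T} (f j)" if "j \<in> I" for j
  proof -
    have "continuous (at t within {a..}) (f j)" if "t \<in> {a..T}" for t
      using deriv[OF \<open>j\<in>I\<close>, of t] that T DERIV_continuous by auto
    hence "continuous (at t within {a..T}) (f j)" if "t \<in> {a..T}" for t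
      using that continuous_within_subset[of t "{a..}" "f j" "{a..T}"] by auto
    thus ?thesis by (simp add: continuous_on_eq_continuous_within)
  qed
  define g where "g j t = f j t - c - e * (t - a)" for j t
  have gcont: "continuous_on {a..T} (g j)" if "j \<in> I" for j
    unfolding g_def by (intro continuous_intros cont that)
  define S where "S = {t\<in>{a..T}. \<forall>j\<in>I. g j t \<le> 0}"
  have Seq: "S = {a..T} \<inter> (\<Inter>j\<in>I. {a..T} \<inter> g j -` {..0})" unfolding S_def by auto
  have cj: "closed ({a..T} \<inter> g j -` {..0})" if "j\<in>I" for j
    using continuous_closed_preimage[OF gcont[OF that]] by auto
  have clS: "closed S" unfolding Seq using cj by (intro closed_Int closed_INT) auto
  have aS: "a \<in> S" unfolding S_def g_def using init T by auto
  have bdd: "bdd_above S" unfolding S_def by (rule bdd_aboveI[of _ T]) auto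
  define \<tau> where "\<tau> = Sup S"
  have tS: "\<tau> \<in> S" unfolding \<tau>_def using closed_contains_Sup[OF _ bdd clS] aS by auto
  have TnS: "T \<notin> S" unfolding S_def g_def using i0 eT by fastforce
  have tT: "\<tau> < T" "a \<le> \<tau>" using tS TnS unfolding S_def by (auto simp: less_le)
  have gle: "g j \<tau> \<le> 0" if "j \<in> I" for j using tS that unfolding S_def by auto
  have ev: "eventually (\<lambda>t. g j t \<le> 0) (at_right \<tau>)" if j: "j \<in> I" for j
  proof (cases "g j \<tau> < 0")
    case True
    have "continuous (at \<tau> within {a..}) (g j)"
      unfolding g_def using deriv[OF j, of \<tau>] tT T
      by (intro continuous_intros DERIV_continuous) auto
    hence "((g j) \<longlongrightarrow> g j \<tau>) (at \<tau> within {a..})" by (simp add: continuous_within)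
    hence "eventually (\<lambda>t. g j t < 0) (at \<tau> within {a..})"
      using True by (rule order_tendstoD)
    moreover have "at_right \<tau> \<le> at \<tau> within {a..}"
      using tT by (intro at_le) auto
    ultimately have "eventually (\<lambda>t. g j t < 0) (at_right \<tau>)" by (rule filter_leD[rotated])
    thus ?thesis by (auto elim: eventually_mono)
  next
    case False
    with gle[OF j] have g0: "g j \<tau> = 0" by simp
    hence fj: "f j \<tau> = c + e * (\<tau> - a)" by (simp add: g_def)
    have maxi: "\<forall>k\<in>I. f k \<tau> \<le> f j \<tau>" using gle fj by (fastforce simp: g_def)
    have "f j \<tau> \<ge> c" using fj e tT by simp
    hence Dle: "D j \<tau> \<le> 0" using crit[OF j tT(2) _ maxi] tT T by auto
    have "(g j has_real_derivative D j \<tau> - e) (at \<tau> within {a..})"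
      unfolding g_def using deriv[OF j, of \<tau>] tT T
      by (auto intro!: derivative_eq_intros)
    from has_real_derivative_neg_dec_right[OF this] Dle e
    obtain d where d: "d > 0" "\<And>h. h > 0 \<Longrightarrow> \<tau> + h \<in> {a..} \<Longrightarrow> h < d \<Longrightarrow> g j \<tau> > g j (\<tau> + h)"
      by force
    show ?thesis unfolding eventually_at_right_field
    proof (intro exI[of _ "\<tau> + d"] conjI allI impI)
      show "\<tau> < \<tau> + d" using d by simp
      fix y assume "\<tau> < y" "y < \<tau> + d"
      with d(2)[of "y - \<tau>"] tT show "g j y \<le> 0" using g0 by auto
    qed
  qed
  have e1: "eventually (\<lambda>t. \<forall>j\<in>I. g j t \<le> 0) (at_right \<tau>)"
    by (rule eventually_ball_finite[OF finI]) (use ev in blast)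
  have e2: "eventually (\<lambda>t. t < T) (at_right \<tau>)"
    unfolding eventually_at_right_field using tT by auto
  have "eventually (\<lambda>t. (\<forall>j\<in>I. g j t \<le> 0) \<and> t < T) (at_right \<tau>)"
    using e1 e2 by (rule eventually_conj)
  moreover have "eventually (\<lambda>t. t > \<tau>) (at_right \<tau>)" by (rule eventually_at_right_less)
  ultimately have "eventually (\<lambda>t. (\<forall>j\<in>I. g j t \<le> 0) \<and> t < T \<and> t > \<tau>) (at_right \<tau>)"
    by eventually_elim auto
  hence "\<exists>t. (\<forall>j\<in>I. g j t \<le> 0) \<and> t < T \<and> t > \<tau>"
    using eventually_happens'[OF trivial_limit_at_right_real] by blast
  then obtain t where t: "\<forall>j\<in>I. g j t \<le> 0" "t < T" "t > \<tau>" by blast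
  hence "t \<in> S" unfolding S_def using tT by auto
  hence "t \<le> \<tau>" unfolding \<tau>_def using bdd by (rule cSup_upper)
  with t show False by simp
qed




locale dens =
  fixes rho :: "real \<Rightarrow> real" and L :: real
  assumes L_pos: "L > 0"
      and rho_meas: "rho \<in> borel_measurable lborel"
      and rho_nonneg: "\<And>y. rho y \<ge> 0"
      and rho_int: "integrable lborel rho"
      and rho_mass: "(LINT y|lborel. rho y) = L"
      and rho_Linf: "esssup lborel (\<lambda>y. ereal \<bar>rho y\<bar>) < \<infinity>"
      and rho_cpt: "bounded (msupp rho)"
begin

definition "R = Linf_norm rho"
definition "G x = (LINT y:{..x}|lborel. rho y)"

lemma R_facts: "AE y in lborel. rho y \<le> R" "0 \<le> R"
proof -
  let ?E = "esssup lborel (\<lambda>y. ereal \<bar>rho y\<bar>)"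
  have meas: "(\<lambda>y. ereal \<bar>rho y\<bar>) \<in> borel_measurable lborel" using rho_meas by measurable
  have AEE: "AE y in lborel. ereal \<bar>rho y\<bar> \<le> ?E" by (rule esssup_AE)
  have E0: "0 \<le> ?E"
  proof (rule ccontr)
    assume neg: "\<not> 0 \<le> ?E"
    have "AE y::real in lborel. False" using AEE
    proof eventually_elim
      fix y assume "ereal \<bar>rho y\<bar> \<le> ?E"
      moreover have "0 \<le> ereal \<bar>rho y\<bar>" by simp
      ultimately show False using neg by (meson order.trans)
    qed
    hence "ae_filter (lborel::real measure) = bot" by (simp add: eventually_False)
    thus False by (simp add: ae_filter_eq_bot_iff)
  qed
  hence Eeq: "?E = ereal R" using rho_Linf unfolding R_def Linf_norm_def
    by (cases ?E) auto
  show "0 \<le> R" using E0 Eeq by simp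
  show "AE y in lborel. rho y \<le> R"
    using esssup_AE[of "\<lambda>y. ereal \<bar>rho y\<bar>" lborel] unfolding Eeq
    by eventually_elim auto
qed

lemma sint: "A \<in> sets borel \<Longrightarrow> set_integrable lborel A rho"
  unfolding set_integrable_def by (rule integrable_mult_indicator) (auto simp: rho_int)

lemma sint_nonneg: "0 \<le> (LINT y:A|lborel. rho y)"
  unfolding set_lebesgue_integral_def by (intro integral_nonneg_AE) (auto simp: rho_nonneg)

lemma G_diff: assumes "a \<le> b" shows "(LINT y:{a..b}|lborel. rho y) = G b - G a"
proof -
  have "{..b} = {..<a} \<union> {a..b}" using assms by auto
  hence "G b = (LINT y:{..<a}|lborel. rho y) + (LINT y:{a..b}|lborel. rho y)"
    unfolding G_def by (simp only:) (rule set_integral_Un, auto intro: sint)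
  moreover have "(LINT y:{..<a}|lborel. rho y) = G a"
    unfolding G_def
  proof (rule set_integral_null_delta)
    have "({..<a} - {..a}) \<union> ({..a} - {..<a}) = {a}" by auto
    thus "({..<a} - {..a}) \<union> ({..a} - {..<a}) \<in> null_sets lborel"
      by (simp add: countable_imp_null_set_lborel)
  qed (auto simp: rho_int)
  ultimately show ?thesis by simp
qed

lemma int_le: assumes "a \<le> b" shows "(LINT y:{a..b}|lborel. rho y) \<le> R * (b - a)"
proof -
  have "(LINT y:{a..b}|lborel. rho y) \<le> (LINT y:{a..b}|lborel. R)"
  proof (rule set_integral_mono_AE)
    show "set_integrable lborel {a..b} rho" by (rule sint) simp
    show "set_integrable lborel {a..b} (\<lambda>_. R)"
      unfolding set_integrable_def
      using integrable_mult_left[OF integrable_indicator[of "{a..b}" lborel], of R]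
      by (simp add: mult.commute emeasure_lborel_Icc_eq)
    show "AE x\<in>{a..b} in lborel. rho x \<le> R" using R_facts(1) by eventually_elim auto
  qed
  also have "\<dots> = R * (b - a)" using assms by (simp add: set_integral_const)
  finally show ?thesis .
qed

lemma G_mono: "a \<le> b \<Longrightarrow> G a \<le> G b"
  using G_diff[of a b] sint_nonneg[of "{a..b}"] by simp

lemma G_lip: "a \<le> b \<Longrightarrow> G b - G a \<le> R * (b - a)"
  using G_diff[of a b] int_le[of a b] by simp

lemma G_cont: "continuous_on UNIV G"
proof (rule lipschitz_on_continuous_on)
  show "R-lipschitz_on UNIV G"
  proof (rule lipschitz_onI)
    fix x y :: real
    show "dist (G x) (G y) \<le> R * dist x y"
    proof (cases "x \<le> y")
      case True thus ?thesis using G_mono[OF True] G_lip[OF True] by (simp add: dist_real_def)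
    next
      case False hence "y \<le> x" by simp
      thus ?thesis using G_mono[of y x] G_lip[of y x] by (simp add: dist_real_def)
    qed
  qed (rule R_facts(2))
qed

lemma G_split: "G x + (LINT y:{x<..}|lborel. rho y) = L"
proof -
  have "(LINT y:UNIV|lborel. rho y) = L" using rho_mass by (simp add: set_lebesgue_integral_def)
  moreover have "UNIV = {..x} \<union> {x<..}" by auto
  ultimately have "L = (LINT y:({..x} \<union> {x<..})|lborel. rho y)" by simp
  also have "\<dots> = G x + (LINT y:{x<..}|lborel. rho y)"
    unfolding G_def by (rule set_integral_Un) (auto intro: sint)
  finally show ?thesis by simp
qed

lemma G_le_L: "G x \<le> L" using G_split[of x] sint_nonneg[of "{x<..}"] by simp

lemma G_nonneg: "0 \<le> G x" unfolding G_def by (rule sint_nonneg)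

lemma G_top: "(\<lambda>k::nat. G (real k)) \<longlonglongrightarrow> L"
proof -
  have "(\<lambda>k::nat. LINT y:{..real k}|lborel. rho y) \<longlonglongrightarrow> (LINT y:(\<Union>k. {..real k})|lborel. rho y)"
    by (rule set_integral_cont_up) (auto simp: incseq_def intro: sint)
  moreover have "(\<Union>k::nat. {..real k}) = UNIV" by (auto intro: real_arch_simple)
  ultimately show ?thesis using rho_mass unfolding G_def by (simp add: set_lebesgue_integral_def)
qed

lemma G_bot: "(\<lambda>k::nat. G (- real k)) \<longlonglongrightarrow> 0"
proof -
  have "(\<lambda>k::nat. LINT y:{- real k<..}|lborel. rho y) \<longlonglongrightarrow> (LINT y:(\<Union>k. {- real k<..})|lborel. rho y)"
    by (rule set_integral_cont_up) (auto simp: incseq_def intro: sint)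
  moreover have "(\<Union>k::nat. {- real k<..}) = UNIV"
  proof -
    have "x \<in> (\<Union>k::nat. {- real k<..})" for x :: real
    proof -
      obtain k :: nat where "- x < real k" using reals_Archimedean2 by blast
      hence "- real k < x" by simp
      thus ?thesis by blast
    qed
    thus ?thesis by auto
  qed
  ultimately have lim: "(\<lambda>k::nat. LINT y:{- real k<..}|lborel. rho y) \<longlonglongrightarrow> L"
    using rho_mass by (simp add: set_lebesgue_integral_def)
  have "(\<lambda>k::nat. L - (LINT y:{- real k<..}|lborel. rho y)) \<longlonglongrightarrow> L - L"
    by (intro tendsto_intros lim)
  moreover have "G (- real k) = L - (LINT y:{- real k<..}|lborel. rho y)" for k :: nat
    using G_split[of "- real k"] by simp
  ultimately show ?thesis by simp
qed

lemma supp_pt: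
  assumes ab: "a < b" and Gab: "G a < G b"
  shows "\<exists>c\<in>msupp rho. a \<le> c \<and> c < b"
proof -
  define S where "S = {a..b} \<inter> G -` {..G a}"
  have clS: "closed S" unfolding S_def
    by (rule continuous_closed_preimage) (auto intro: continuous_on_subset[OF G_cont])
  have aS: "a \<in> S" using ab by (simp add: S_def)
  have bdd: "bdd_above S" unfolding S_def by (rule bdd_aboveI[of _ b]) auto
  define c where "c = Sup S"
  have cS: "c \<in> S" unfolding c_def using closed_contains_Sup[OF _ bdd clS] aS by auto
  hence c1: "a \<le> c" "c \<le> b" "G c \<le> G a" by (auto simp: S_def)
  have cb: "c < b" using c1 Gab by (cases "c = b") auto
  have "c \<in> msupp rho" unfolding msupp_def
  proof (intro CollectI allI impI)
    fix e :: real assume e: "e > 0"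
    have "(LINT y:{c-e..c+e}|lborel. rho y) = G (c+e) - G (c-e)" using e by (intro G_diff) simp
    moreover have "G (c-e) \<le> G c" using e by (intro G_mono) simp
    moreover have "G (c+e) > G a"
    proof (cases "c + e \<le> b")
      case True
      have "c + e \<notin> S"
      proof
        assume "c + e \<in> S"
        hence "c + e \<le> c" unfolding c_def using bdd by (rule cSup_upper)
        thus False using e by simp
      qed
      thus ?thesis using True c1 e unfolding S_def by auto
    next
      case False
      thus ?thesis using G_mono[of b "c+e"] Gab by simp
    qed
    ultimately show "(LINT y:{c-e..c+e}|lborel. rho y) > 0" using c1 by simp
  qed
  thus ?thesis using c1 cb by auto
qed

lemma msupp_ne: "msupp rho \<noteq> {}"
proof
  assume emp: "msupp rho = {}"
  have eq: "G a = G b" if "a \<le> b" for a b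
  proof (rule ccontr)
    assume "G a \<noteq> G b"
    hence "G a < G b" using G_mono[OF that] by simp
    moreover have "a < b" using that calculation by (cases "a = b") auto
    ultimately show False using supp_pt emp by blast
  qed
  have "(\<lambda>k::nat. G (- real k)) = (\<lambda>k. G (real k))" by (rule ext, rule eq) simp
  hence "(\<lambda>k::nat. G (real k)) \<longlonglongrightarrow> 0" using G_bot by simp
  with G_top have "L = 0" using LIMSEQ_unique by blast
  thus False using L_pos by simp
qed

lemma supp_bdd: "bdd_above (msupp rho)" "bdd_below (msupp rho)"
  using rho_cpt by (auto intro: bounded_imp_bdd_above bounded_imp_bdd_below)

lemma G_left: assumes "x \<le> xbar_min rho" shows "G x = 0"
proof (rule ccontr)
  assume "G x \<noteq> 0"
  hence pos: "G x > 0" using G_nonneg[of x] by simp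
  from order_tendstoD(2)[OF G_bot pos] obtain k :: nat where k: "G (- real k) < G x"
    by (meson eventually_sequentially order.refl)
  have "- real k < x" using G_mono[of x "- real k"] k by (cases "- real k < x") auto
  from supp_pt[OF this k] obtain c where c: "c \<in> msupp rho" "c < x" by auto
  have "xbar_min rho \<le> c" unfolding xbar_min_def using c(1) supp_bdd by (intro cInf_lower)
  thus False using c assms by simp
qed

lemma G_right_strict: assumes "xbar_max rho < x" shows "G x = L"
proof (rule ccontr)
  assume "G x \<noteq> L"
  hence lt: "G x < L" using G_le_L[of x] by simp
  from order_tendstoD(1)[OF G_top lt] obtain k :: nat where k: "G x < G (real k)"
    by (meson eventually_sequentially order.refl)
  have "x < real k" using G_mono[of "real k" x] k by (cases "x < real k") auto
  from supp_pt[OF this k] obtain c where c: "c \<in> msupp rho" "x \<le> c" by auto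
  have "c \<le> xbar_max rho" unfolding xbar_max_def using c(1) supp_bdd by (intro cSup_upper)
  thus False using c assms by simp
qed

lemma G_right: assumes "xbar_max rho \<le> x" shows "G x = L"
proof (cases "xbar_max rho < x")
  case True thus ?thesis by (rule G_right_strict)
next
  case False
  hence x: "x = xbar_max rho" using assms by simp
  show ?thesis
  proof (rule ccontr)
    assume "G x \<noteq> L"
    hence d: "L - G x > 0" using G_le_L[of x] by simp
    define h where "h = (L - G x) / (R + 1)"
    have h: "h > 0" using d R_facts(2) by (simp add: h_def)
    have "G (x + h) = L" using h x by (intro G_right_strict) simp
    moreover have "G (x + h) - G x \<le> R * h" using G_lip[of x "x + h"] h by simp
    ultimately have "L - G x \<le> R * h" by simp
    moreover have "R * h < L - G x"
    proof -
      have "R * h = (L - G x) * (R / (R + 1))" using R_facts(2) by (simp add: h_def field_simps)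
      also have "\<dots> < (L - G x) * 1" using d R_facts(2) by (intro mult_strict_left_mono) auto
      finally show ?thesis by simp
    qed
    ultimately show False by simp
  qed
qed

lemma lipfrac: "d > 0 \<Longrightarrow> R * (d / (R + 1)) < d"
proof -
  assume d: "d > 0"
  have "R * (d / (R + 1)) = d * (R / (R + 1))" using R_facts(2) by (simp add: field_simps)
  also have "\<dots> < d * 1" using d R_facts(2) by (intro mult_strict_left_mono) auto
  finally show ?thesis by simp
qed

lemma NL: "real (Nn n) * elln L n = L" by (simp add: Nn_def elln_def)

lemma xbar_props:
  "i \<le> Nn n \<Longrightarrow> G (xbar rho L n i) = real i * elln L n \<and> xbar_min rho \<le> xbar rho L n i
     \<and> xbar rho L n i \<le> xbar_max rho"
proof (induction i)
  case 0
  have "xbar_min rho \<le> xbar_max rho" unfolding xbar_min_def xbar_max_def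
    using msupp_ne supp_bdd by (intro cInf_le_cSup)
  thus ?case using G_left[of "xbar_min rho"] by simp
next
  case (Suc i)
  define l where "l = elln L n"
  have l: "l > 0" using L_pos by (simp add: l_def elln_def)
  define a where "a = xbar rho L n i"
  have IH: "G a = real i * l" "xbar_min rho \<le> a" "a \<le> xbar_max rho"
    using Suc by (auto simp: a_def l_def)
  define t where "t = real (Suc i) * l"
  have tL: "t \<le> L"
  proof -
    have "t \<le> real (Nn n) * l" unfolding t_def using Suc.prems l by (intro mult_right_mono) auto
    thus ?thesis using NL by (simp add: l_def)
  qed
  define S where "S = {x. (LINT y:{a..x}|lborel. rho y) < l}"
  have Seq: "S = {x. x < a \<or> G x < t}"
  proof -
    have "(LINT y:{a..x}|lborel. rho y) < l \<longleftrightarrow> x < a \<or> G x < t" for x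
    proof (cases "a \<le> x")
      case True
      have "(LINT y:{a..x}|lborel. rho y) = G x - real i * l" using G_diff[OF True] IH(1) by simp
      thus ?thesis using True unfolding t_def by (auto simp: algebra_simps)
    next
      case False thus ?thesis using l by (simp add: set_lebesgue_integral_def)
    qed
    thus ?thesis by (auto simp: S_def)
  qed
  have xS: "xbar rho L n (Suc i) = Sup S" by (simp add: S_def a_def l_def)
  have aS: "a \<in> S" unfolding Seq using IH(1) l by (simp add: t_def algebra_simps)
  have Sle: "x \<le> xbar_max rho" if "x \<in> S" for x
  proof (rule ccontr)
    assume "\<not> x \<le> xbar_max rho"
    hence "G x = L" "\<not> x < a" using G_right[of x] IH(3) by auto
    thus False using that tL unfolding Seq by auto
  qed
  have bdd: "bdd_above S" using Sle by (intro bdd_aboveI) auto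
  define s where "s = Sup S"
  have as: "a \<le> s" unfolding s_def using aS bdd by (rule cSup_upper)
  have sm: "s \<le> xbar_max rho" unfolding s_def using aS Sle by (intro cSup_least) auto
  have Gs: "G s = t"
  proof (rule ccontr)
    assume ne: "G s \<noteq> t"
    show False
    proof (cases "G s < t")
      case True
      define h where "h = (t - G s) / (R + 1)"
      have h: "h > 0" using True R_facts(2) by (simp add: h_def)
      have "G (s + h) - G s \<le> R * h" using G_lip[of s "s+h"] h by simp
      moreover have "R * h < t - G s" unfolding h_def using True by (intro lipfrac) simp
      ultimately have "s + h \<in> S" unfolding Seq by simp
      hence "s + h \<le> s" unfolding s_def using bdd by (rule cSup_upper)
      thus False using h by simp
    next
      case False
      hence gt: "G s > t" using ne by simp
      have "s \<noteq> a" using gt IH(1) l by (auto simp: t_def algebra_simps)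
      hence sa: "s > a" using as by simp
      define h where "h = min (s - a) ((G s - t) / (R + 1))"
      have h: "h > 0" using sa gt R_facts(2) by (simp add: h_def)
      have "x \<le> s - h" if "x \<in> S" for x
      proof (rule ccontr)
        assume "\<not> x \<le> s - h"
        hence xs: "s - h < x" by simp
        have "x \<le> s" unfolding s_def using that bdd by (rule cSup_upper)
        have "\<not> x < a" using xs h_def by auto
        hence Gx: "G x < t" using that unfolding Seq by auto
        have "G s - G x \<le> R * (s - x)" using G_lip \<open>x \<le> s\<close> by simp
        also have "\<dots> \<le> R * ((G s - t) / (R + 1))"
          using xs R_facts(2) by (intro mult_left_mono) (auto simp: h_def)
        also have "\<dots> < G s - t" using gt by (intro lipfrac) simp
        finally show False using Gx by simp
      qed
      hence "s \<le> s - h" unfolding s_def using aS by (intro cSup_least) (auto simp: s_def)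
      thus False using h by simp
    qed
  qed
  show ?case using Gs IH as sm xS by (simp add: s_def t_def l_def)
qed

end



locale ftl =
  fixes v v' :: "real \<Rightarrow> real" and x :: "nat \<Rightarrow> real \<Rightarrow> real" and N :: nat and l R :: real
  assumes V1_deriv: "\<And>r. r \<ge> 0 \<Longrightarrow> (v has_real_derivative v' r) (at r within {0..})"
    and V1_decr: "\<And>a b. 0 \<le> a \<Longrightarrow> a < b \<Longrightarrow> v b < v a"
    and V3: "\<And>a b. 0 \<le> a \<Longrightarrow> a \<le> b \<Longrightarrow> b * v' b \<le> a * v' a"
    and N: "N \<ge> 1" and l: "l > 0" and R: "R > 0"
    and ord: "\<And>t i. t \<ge> 0 \<Longrightarrow> i < N \<Longrightarrow> x i t < x (Suc i) t"
    and dN: "\<And>t. t \<ge> 0 \<Longrightarrow> (x N has_real_derivative v 0) (at t within {0..})"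
    and di: "\<And>t i. t \<ge> 0 \<Longrightarrow> i < N \<Longrightarrow>
               (x i has_real_derivative v (l / (x (Suc i) t - x i t))) (at t within {0..})"
    and init: "\<And>i. i < N \<Longrightarrow> l \<le> R * (x (Suc i) 0 - x i 0)"
begin

definition "d i t = x (Suc i) t - x i t"
definition "y i t = l / d i t"
definition "z i t = (if i < N then v (y i t) else v 0)"
definition "a i t = z (Suc i) t - z i t"
definition "zd i t = (if i < N then v' (y i t) * (- l * a i t / (d i t)^2) else 0)"
definition "ad i t = zd (Suc i) t - zd i t"

lemma d_pos: "t \<ge> 0 \<Longrightarrow> i < N \<Longrightarrow> d i t > 0"
  using ord by (simp add: d_def)

lemma y_pos: "t \<ge> 0 \<Longrightarrow> i < N \<Longrightarrow> y i t > 0"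
  using d_pos l by (simp add: y_def)

lemma v_mono: "0 \<le> p \<Longrightarrow> p \<le> q \<Longrightarrow> v q \<le> v p"
  using V1_decr[of p q] by (cases "p = q") auto

lemma vd_nonpos: assumes r: "0 < r" shows "v' r \<le> 0"
proof (rule ccontr)
  assume "\<not> v' r \<le> 0"
  hence "v' r > 0" by simp
  from has_real_derivative_pos_inc_right[OF V1_deriv this] r
  obtain e where e: "e > 0" "\<And>h. h > 0 \<Longrightarrow> r + h \<in> {0..} \<Longrightarrow> h < e \<Longrightarrow> v r < v (r + h)"
    by force
  have "v r < v (r + e/2)" using e r by (intro e(2)) auto
  moreover have "v (r + e/2) < v r" using e r by (intro V1_decr) auto
  ultimately show False by simp
qed

lemma x_deriv: "t \<ge> 0 \<Longrightarrow> i \<le> N \<Longrightarrow> (x i has_real_derivative z i t) (at t within {0..})"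
  using di dN by (cases "i = N") (auto simp: z_def y_def d_def)

lemma d_deriv: "t \<ge> 0 \<Longrightarrow> i < N \<Longrightarrow> (d i has_real_derivative a i t) (at t within {0..})"
proof -
  assume t: "t \<ge> 0" and i: "i < N"
  have "((\<lambda>t. x (Suc i) t - x i t) has_real_derivative z (Suc i) t - z i t) (at t within {0..})"
    using x_deriv[OF t, of "Suc i"] x_deriv[OF t, of i] i by (intro DERIV_diff) auto
  thus ?thesis by (simp add: d_def[abs_def] a_def)
qed

lemma maxpr: assumes t: "t \<ge> 0" and i: "i < N" shows "l / R \<le> d i t"
proof -
  have "- d i t \<le> - (l / R)"
  proof (rule maxprinc[where I = "{..<N}" and f = "\<lambda>i t. - d i t" and D = "\<lambda>i t. - a i t"
          and a = 0 and b = t])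
    show "finite {..<N}" by simp
  next
    fix j \<tau> assume "j \<in> {..<N}" "0 \<le> \<tau>" "\<tau> \<le> t"
    thus "((\<lambda>t. - d j t) has_real_derivative - a j \<tau>) (at \<tau> within {0..})"
      using d_deriv by (auto intro!: derivative_eq_intros)
  next
    fix j \<tau> assume j: "j \<in> {..<N}" "0 \<le> \<tau>" "\<tau> < t"
      and mx: "\<forall>k\<in>{..<N}. - d k \<tau> \<le> - d j \<tau>"
    show "- a j \<tau> \<le> 0"
    proof (cases "Suc j < N")
      case True
      have "d j \<tau> \<le> d (Suc j) \<tau>" using mx True by auto
      hence "y (Suc j) \<tau> \<le> y j \<tau>" unfolding y_def using d_pos[of \<tau> j] j l
        by (intro divide_left_mono) auto
      hence "v (y j \<tau>) \<le> v (y (Suc j) \<tau>)" using y_pos[of \<tau> "Suc j"] True j by (intro v_mono) auto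
      thus ?thesis using True j by (simp add: a_def z_def)
    next
      case False
      hence "Suc j = N" using j by simp
      moreover have "v (y j \<tau>) \<le> v 0" using y_pos[of \<tau> j] j by (intro v_mono) auto
      ultimately show ?thesis using j by (simp add: a_def z_def)
    qed
  next
    fix j assume "j \<in> {..<N}"
    thus "- d j 0 \<le> - (l / R)" using init[of j] R by (simp add: d_def field_simps)
  qed (use t i in auto)
  thus ?thesis by simp
qed

lemma y_le: assumes "t \<ge> 0" "i < N" shows "y i t \<le> R"
proof -
  have "l / R \<le> d i t" by (rule maxpr[OF assms])
  hence "l \<le> R * d i t" using R by (simp add: field_simps)
  thus ?thesis using d_pos[OF assms] by (simp add: y_def field_simps)
qed

lemma spread: assumes t: "t \<ge> 0"
  shows "x N t - x 0 t \<le> (x N 0 - x 0 0) + (v 0 - v R) * t"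
proof -
  have "(x N t - x 0 t) - (x N 0 - x 0 0) - (v 0 - v R) * t \<le> 0"
  proof (rule maxprinc[where I = "{0::nat}" and f = "\<lambda>_ t. (x N t - x 0 t) - (x N 0 - x 0 0) - (v 0 - v R) * t"
          and D = "\<lambda>_ t. z N t - z 0 t - (v 0 - v R)" and a = 0 and b = t])
    fix j :: nat and \<tau> assume "j \<in> {0}" "0 \<le> \<tau>" "\<tau> \<le> t"
    thus "((\<lambda>t. (x N t - x 0 t) - (x N 0 - x 0 0) - (v 0 - v R) * t) has_real_derivative
          z N \<tau> - z 0 \<tau> - (v 0 - v R)) (at \<tau> within {0..})"
      using x_deriv[of \<tau> N] x_deriv[of \<tau> 0] by (auto intro!: derivative_eq_intros)
  next
    fix j :: nat and \<tau> assume "j \<in> {0}" "0 \<le> \<tau>" "\<tau> < t"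
    hence "v R \<le> v (y 0 \<tau>)" using y_le[of \<tau> 0] y_pos[of \<tau> 0] N by (intro v_mono) auto
    thus "z N \<tau> - z 0 \<tau> - (v 0 - v R) \<le> 0" using N by (simp add: z_def)
  qed (use t in auto)
  thus ?thesis by simp
qed

lemma v_at: "r > 0 \<Longrightarrow> (v has_real_derivative v' r) (at r)"
proof -
  assume r: "r > 0"
  have "at r within {0..} = at r" using r by (intro at_within_interior) auto
  thus ?thesis using V1_deriv[of r] r by simp
qed

lemma y_deriv: "t \<ge> 0 \<Longrightarrow> i < N \<Longrightarrow>
   (y i has_real_derivative - l * a i t / (d i t)^2) (at t within {0..})"
proof -
  assume t: "t \<ge> 0" and i: "i < N"
  have "((\<lambda>t. l / d i t) has_real_derivative - l * a i t / (d i t)^2) (at t within {0..})"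
    using d_deriv[OF t i] d_pos[OF t i]
    by (auto intro!: derivative_eq_intros simp: power2_eq_square field_simps)
  thus ?thesis by (simp add: y_def[abs_def])
qed

lemma z_deriv: "t \<ge> 0 \<Longrightarrow> i \<le> N \<Longrightarrow> (z i has_real_derivative zd i t) (at t within {0..})"
proof -
  assume t: "t \<ge> 0" and i: "i \<le> N"
  show ?thesis
  proof (cases "i < N")
    case True
    have "((\<lambda>t. v (y i t)) has_real_derivative v' (y i t) * (- l * a i t / (d i t)^2)) (at t within {0..})"
      by (rule DERIV_chain2[OF v_at y_deriv[OF t True]]) (rule y_pos[OF t True])
    moreover have "z i = (\<lambda>t. v (y i t))" using True by (simp add: z_def[abs_def])
    ultimately show ?thesis using True by (simp add: zd_def)
  next
    case False
    hence "z i = (\<lambda>t. v 0)" by (simp add: z_def[abs_def])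
    thus ?thesis using False by (simp add: zd_def)
  qed
qed

lemma a_deriv: "t \<ge> 0 \<Longrightarrow> i < N \<Longrightarrow> (a i has_real_derivative ad i t) (at t within {0..})"
proof -
  assume t: "t \<ge> 0" and i: "i < N"
  have "((\<lambda>t. z (Suc i) t - z i t) has_real_derivative zd (Suc i) t - zd i t) (at t within {0..})"
    using z_deriv[OF t, of "Suc i"] z_deriv[OF t, of i] i by (intro DERIV_diff) auto
  thus ?thesis by (simp add: a_def[abs_def] ad_def)
qed

lemma zd_eq: "t \<ge> 0 \<Longrightarrow> i < N \<Longrightarrow> zd i t = - (v' (y i t) * y i t) * (a i t / d i t)"
  using d_pos[of t i] by (simp add: zd_def y_def power2_eq_square field_simps)

lemma ad_le:
  assumes j: "j < N" and tau: "\<tau> > 0" and apos: "a j \<tau> > 0"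
    and mx: "Suc j < N \<Longrightarrow> \<tau> * a (Suc j) \<tau> / d (Suc j) \<tau> \<le> \<tau> * a j \<tau> / d j \<tau>"
  shows "ad j \<tau> \<le> 0"
proof -
  have t0: "\<tau> \<ge> 0" using tau by simp
  define w where "w = a j \<tau> / d j \<tau>"
  have w: "w > 0" using apos d_pos[OF t0 j] by (simp add: w_def)
  define p where "p k = - (v' (y k \<tau>) * y k \<tau>)" for k
  have p0: "p k \<ge> 0" if "k < N" for k
    using vd_nonpos[OF y_pos[OF t0 that]] y_pos[OF t0 that] by (simp add: p_def mult_nonpos_nonneg)
  have zdj: "zd j \<tau> = p j * w" using zd_eq[OF t0 j] by (simp add: p_def w_def)
  show ?thesis
  proof (cases "Suc j < N")
    case False
    hence "zd (Suc j) \<tau> = 0" by (simp add: zd_def)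
    thus ?thesis using zdj p0[OF j] w by (simp add: ad_def)
  next
    case True
    define w' where "w' = a (Suc j) \<tau> / d (Suc j) \<tau>"
    have zds: "zd (Suc j) \<tau> = p (Suc j) * w'" using zd_eq[OF t0 True] by (simp add: p_def w'_def)
    have "\<tau> * w' \<le> \<tau> * w" using mx[OF True] by (simp add: w_def w'_def)
    hence ww: "w' \<le> w" using tau by simp
    have "z j \<tau> < z (Suc j) \<tau>" using apos by (simp add: a_def)
    hence vv: "v (y j \<tau>) < v (y (Suc j) \<tau>)" using True j by (simp add: z_def)
    have yy: "y (Suc j) \<tau> < y j \<tau>"
    proof (rule ccontr)
      assume "\<not> y (Suc j) \<tau> < y j \<tau>"
      hence "v (y (Suc j) \<tau>) \<le> v (y j \<tau>)" using y_pos[OF t0 j] by (intro v_mono) auto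
      thus False using vv by simp
    qed
    have "y j \<tau> * v' (y j \<tau>) \<le> y (Suc j) \<tau> * v' (y (Suc j) \<tau>)"
      using yy y_pos[OF t0 True] by (intro V3) auto
    hence pp: "p (Suc j) \<le> p j" by (simp add: p_def mult.commute)
    have "p (Suc j) * w' \<le> p (Suc j) * w" using ww p0[OF True] by (intro mult_left_mono)
    also have "\<dots> \<le> p j * w" using pp w by (intro mult_right_mono) auto
    finally show ?thesis using zds zdj by (simp add: ad_def)
  qed
qed

lemma oleinik: assumes t: "t \<ge> 0" and i: "i < N" shows "t * a i t \<le> d i t"
proof -
  have "t * a i t / d i t \<le> 1"
  proof (rule maxprinc[where I = "{..<N}" and f = "\<lambda>i t. t * a i t / d i t"
        and D = "\<lambda>i t. a i t / d i t + t * (ad i t * d i t - a i t * a i t) / (d i t)^2"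
        and a = 0 and b = t])
    fix j \<tau> assume j: "j \<in> {..<N}" "0 \<le> \<tau>" "\<tau> \<le> t"
    thus "((\<lambda>t. t * a j t / d j t) has_real_derivative
        a j \<tau> / d j \<tau> + \<tau> * (ad j \<tau> * d j \<tau> - a j \<tau> * a j \<tau>) / (d j \<tau>)^2) (at \<tau> within {0..})"
      using a_deriv[of \<tau> j] d_deriv[of \<tau> j] d_pos[of \<tau> j]
      by (auto intro!: derivative_eq_intros simp: power2_eq_square field_simps)
  next
    fix j \<tau> assume j: "j \<in> {..<N}" "0 \<le> \<tau>" "\<tau> < t"
      and mx: "\<forall>k\<in>{..<N}. \<tau> * a k \<tau> / d k \<tau> \<le> \<tau> * a j \<tau> / d j \<tau>"
      and ge: "1 \<le> \<tau> * a j \<tau> / d j \<tau>"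
    have jN: "j < N" using j by simp
    have dj: "d j \<tau> > 0" using d_pos[OF j(2) jN] .
    define w where "w = a j \<tau> / d j \<tau>"
    have tw: "1 \<le> \<tau> * w" using ge by (simp add: w_def)
    have tau: "\<tau> > 0" using tw j(2) by (cases "\<tau> = 0") auto
    have w: "w > 0" using tw tau by (metis zero_less_mult_pos less_le_trans zero_less_one)
    have apos: "a j \<tau> > 0" using w dj by (simp add: w_def zero_less_divide_iff)
    have adle: "ad j \<tau> \<le> 0" using mx by (intro ad_le[OF jN tau apos]) auto
    have eq: "a j \<tau> / d j \<tau> + \<tau> * (ad j \<tau> * d j \<tau> - a j \<tau> * a j \<tau>) / (d j \<tau>)^2
        = \<tau> * (ad j \<tau> / d j \<tau>) + w * (1 - \<tau> * w)"
      using dj by (simp add: w_def power2_eq_square field_simps)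
    have "\<tau> * (ad j \<tau> / d j \<tau>) \<le> 0" using tau adle dj
      by (intro mult_nonneg_nonpos) (auto simp: divide_nonpos_pos)
    moreover have "w * (1 - \<tau> * w) \<le> 0" using w tw by (intro mult_nonneg_nonpos) auto
    ultimately show "a j \<tau> / d j \<tau> + \<tau> * (ad j \<tau> * d j \<tau> - a j \<tau> * a j \<tau>) / (d j \<tau>)^2 \<le> 0"
      unfolding eq by simp
  qed (use t i in auto)
  thus ?thesis using d_pos[OF t i] by (simp add: field_simps)
qed

lemma sum_a: "(\<Sum>i<N. a i t) = v 0 - v (y 0 t)"
  unfolding a_def using sum_lessThan_telescope[of "\<lambda>i. z i t" N] N by (simp add: z_def)

lemma sum_d: "(\<Sum>i<N. d i t) = x N t - x 0 t"
  unfolding d_def using sum_lessThan_telescope[of "\<lambda>i. x i t" N] by simp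

lemma sumabs: assumes t: "t > 0"
  shows "(\<Sum>i<N. \<bar>a i t\<bar>) \<le> 2 * (x N 0 - x 0 0) / t + 2 * (v 0 - v R)"
proof -
  have "(\<Sum>i<N. \<bar>a i t\<bar>) = (\<Sum>i<N. 2 * max (a i t) 0 - a i t)"
    by (intro sum.cong) auto
  also have "\<dots> = 2 * (\<Sum>i<N. max (a i t) 0) - (v 0 - v (y 0 t))"
    by (simp add: sum_subtractf sum_distrib_left sum_a)
  also have "\<dots> \<le> 2 * (\<Sum>i<N. max (a i t) 0)"
    using v_mono[of 0 "y 0 t"] y_pos[of t 0] N t by simp
  also have "\<dots> \<le> 2 * (\<Sum>i<N. d i t / t)"
  proof -
    have "max (a i t) 0 \<le> d i t / t" if "i < N" for i
      using oleinik[of t i] d_pos[of t i] that t by (auto simp: field_simps)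
    thus ?thesis by (intro mult_left_mono sum_mono) auto
  qed
  also have "\<dots> = 2 * (x N t - x 0 t) / t" by (simp add: sum_divide_distrib[symmetric] sum_d)
  also have "\<dots> \<le> 2 * ((x N 0 - x 0 0) + (v 0 - v R) * t) / t"
    using spread[of t] t by (intro divide_right_mono) auto
  also have "\<dots> = 2 * (x N 0 - x 0 0) / t + 2 * (v 0 - v R)" using t by (simp add: field_simps)
  finally show ?thesis .
qed

lemma L1:
  assumes del: "\<delta> > 0" and s: "\<delta> \<le> s" and st: "s \<le> t"
  shows "(\<Sum>i<N. l * \<bar>y i t - y i s\<bar>) \<le> R^2 * (2 * (x N 0 - x 0 0) / \<delta> + 2 * (v 0 - v R)) * (t - s)"
proof -
  define K where "K = 2 * (x N 0 - x 0 0) / \<delta> + 2 * (v 0 - v R)"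
  have D0: "x N 0 - x 0 0 \<ge> 0" unfolding sum_d[symmetric] using d_pos[of 0]
    by (intro sum_nonneg) (auto intro: less_imp_le)
  have Kb: "(\<Sum>i<N. \<bar>a i \<tau>\<bar>) \<le> K" if "\<tau> \<ge> \<delta>" for \<tau>
  proof -
    have "(\<Sum>i<N. \<bar>a i \<tau>\<bar>) \<le> 2 * (x N 0 - x 0 0) / \<tau> + 2 * (v 0 - v R)"
      using that del by (intro sumabs) simp
    also have "2 * (x N 0 - x 0 0) / \<tau> \<le> 2 * (x N 0 - x 0 0) / \<delta>"
      using D0 that del by (intro divide_left_mono) auto
    finally show ?thesis by (simp add: K_def)
  qed
  define \<sigma> where "\<sigma> i = sgn (y i t - y i s)" for i
  define \<Phi> where "\<Phi> \<tau> = (\<Sum>i<N. l * \<sigma> i * y i \<tau>)" for \<tau>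
  have "\<Phi> t - \<Phi> s - R^2 * K * (t - s) \<le> 0"
  proof (rule maxprinc[where I = "{0::nat}" and f = "\<lambda>_ \<tau>. \<Phi> \<tau> - \<Phi> s - R^2 * K * (\<tau> - s)"
      and D = "\<lambda>_ \<tau>. (\<Sum>i<N. l * \<sigma> i * (- l * a i \<tau> / (d i \<tau>)^2)) - R^2 * K" and a = s and b = t])
    fix j :: nat and \<tau> assume j: "j \<in> {0}" "s \<le> \<tau>" "\<tau> \<le> t"
    have t0: "\<tau> \<ge> 0" using j s del by simp
    have yd: "(y i has_real_derivative - l * a i \<tau> / (d i \<tau>)^2) (at \<tau> within {s..})" if "i < N" for i
      using y_deriv[OF t0 that] by (rule DERIV_subset) (use s del in auto)
    have "(\<Phi> has_real_derivative (\<Sum>i<N. l * \<sigma> i * (- l * a i \<tau> / (d i \<tau>)^2))) (at \<tau> within {s..})"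
      unfolding \<Phi>_def[abs_def] by (intro DERIV_sum DERIV_cmult yd) auto
    thus "((\<lambda>\<tau>. \<Phi> \<tau> - \<Phi> s - R^2 * K * (\<tau> - s)) has_real_derivative
        (\<Sum>i<N. l * \<sigma> i * (- l * a i \<tau> / (d i \<tau>)^2)) - R^2 * K) (at \<tau> within {s..})"
      by (auto intro!: derivative_eq_intros)
  next
    fix j :: nat and \<tau> assume j: "j \<in> {0}" "s \<le> \<tau>" "\<tau> < t"
    have t0: "\<tau> \<ge> 0" and td: "\<tau> \<ge> \<delta>" using j s del by auto
    have trm: "l * \<sigma> i * (- l * a i \<tau> / (d i \<tau>)^2) \<le> R^2 * \<bar>a i \<tau>\<bar>" if i: "i < N" for i
    proof -
      have dp: "d i \<tau> > 0" using d_pos[OF t0 i] .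
      have "l * \<sigma> i * (- l * a i \<tau> / (d i \<tau>)^2) \<le> \<bar>l * \<sigma> i * (- l * a i \<tau> / (d i \<tau>)^2)\<bar>" by (rule abs_ge_self)
      also have "\<dots> = \<bar>\<sigma> i\<bar> * ((y i \<tau>)^2 * \<bar>a i \<tau>\<bar>)"
        using dp l by (simp add: y_def abs_mult power2_eq_square field_simps)
      also have "\<dots> \<le> 1 * ((y i \<tau>)^2 * \<bar>a i \<tau>\<bar>)"
        by (intro mult_right_mono) (auto simp: \<sigma>_def abs_sgn_eq)
      also have "\<dots> \<le> R^2 * \<bar>a i \<tau>\<bar>"
        using y_le[OF t0 i] y_pos[OF t0 i] by (auto intro!: mult_right_mono power_mono)
      finally show ?thesis .
    qed
    have "(\<Sum>i<N. l * \<sigma> i * (- l * a i \<tau> / (d i \<tau>)^2)) \<le> (\<Sum>i<N. R^2 * \<bar>a i \<tau>\<bar>)"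
      using trm by (intro sum_mono) auto
    also have "\<dots> = R^2 * (\<Sum>i<N. \<bar>a i \<tau>\<bar>)" by (simp add: sum_distrib_left)
    also have "\<dots> \<le> R^2 * K" using Kb[OF td] by (intro mult_left_mono) auto
    finally show "(\<Sum>i<N. l * \<sigma> i * (- l * a i \<tau> / (d i \<tau>)^2)) - R^2 * K \<le> 0" by simp
  qed (use st in auto)
  moreover have "\<Phi> t - \<Phi> s = (\<Sum>i<N. l * \<bar>y i t - y i s\<bar>)"
  proof -
    have "\<Phi> t - \<Phi> s = (\<Sum>i<N. l * (\<sigma> i * (y i t - y i s)))"
      unfolding \<Phi>_def by (simp add: sum_subtractf[symmetric] algebra_simps)
    also have "\<dots> = (\<Sum>i<N. l * \<bar>y i t - y i s\<bar>)"
      by (intro sum.cong refl) (auto simp: \<sigma>_def sgn_mult_self_eq abs_sgn)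
    finally show ?thesis .
  qed
  ultimately show ?thesis by (simp add: K_def)
qed

end



lemma step_int:
  fixes c :: "nat \<Rightarrow> real" and l L :: real and N :: nat
  assumes l: "l > 0"
  shows "(LINT z:{0..L}|lborel. \<bar>\<Sum>i<N. c i * indicator {real i * l ..< real (Suc i) * l} z\<bar>)
         \<le> (\<Sum>i<N. l * \<bar>c i\<bar>)"
proof -
  define I where "I i = {real i * l ..< real (Suc i) * l}" for i
  have le: "real i * l \<le> real (Suc i) * l" for i using l by (intro mult_right_mono) auto
  have ind_int: "integrable lborel (indicat_real (I i))" for i
    unfolding I_def using le[of i] by (simp add: integrable_indicator_iff)
  define f where "f z = (\<Sum>i<N. c i * indicator (I i) z)" for z
  define g where "g z = (\<Sum>i<N. \<bar>c i\<bar> * indicator (I i) z)" for z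
  have fint: "integrable lborel f"
  proof -
    have "\<And>i. i \<in> {..<N} \<Longrightarrow> integrable lborel (\<lambda>z. c i * indicator (I i) z)"
      using ind_int by (rule integrable_mult_right)
    hence "integrable lborel (\<lambda>z. \<Sum>i\<in>{..<N}. c i * indicator (I i) z)" by (rule Bochner_Integration.integrable_sum)
    thus ?thesis unfolding f_def[abs_def] .
  qed
  have gint: "integrable lborel g"
  proof -
    have "\<And>i. i \<in> {..<N} \<Longrightarrow> integrable lborel (\<lambda>z. \<bar>c i\<bar> * indicator (I i) z)"
      using ind_int by (rule integrable_mult_right)
    hence "integrable lborel (\<lambda>z. \<Sum>i\<in>{..<N}. \<bar>c i\<bar> * indicator (I i) z)" by (rule Bochner_Integration.integrable_sum)
    thus ?thesis unfolding g_def[abs_def] .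
  qed
  have fg: "\<bar>f z\<bar> \<le> g z" for z
  proof -
    have "\<bar>f z\<bar> \<le> (\<Sum>i<N. \<bar>c i * indicator (I i) z\<bar>)" unfolding f_def by (rule sum_abs)
    also have "\<dots> = g z" unfolding g_def by (intro sum.cong) (auto simp: abs_mult)
    finally show ?thesis .
  qed
  have "(LINT z:{0..L}|lborel. \<bar>f z\<bar>) = (LBINT z. indicator {0..L} z *\<^sub>R \<bar>f z\<bar>)"
    by (simp add: set_lebesgue_integral_def)
  also have "\<dots> \<le> (LBINT z. g z)"
  proof (rule integral_mono)
    show "integrable lborel (\<lambda>z. indicator {0..L} z *\<^sub>R \<bar>f z\<bar>)"
      by (intro integrable_mult_indicator integrable_abs fint) auto
    show "integrable lborel g" by (rule gint)
    fix z
    have "indicator {0..L} z *\<^sub>R \<bar>f z\<bar> \<le> \<bar>f z\<bar>" by (simp add: indicator_def)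
    thus "indicator {0..L} z *\<^sub>R \<bar>f z\<bar> \<le> g z" using fg[of z] by linarith
  qed
  also have "\<dots> = (\<Sum>i<N. (LBINT z. \<bar>c i\<bar> * indicator (I i) z))"
    unfolding g_def by (rule Bochner_Integration.integral_sum) (rule integrable_mult_right[OF ind_int])
  also have "\<dots> = (\<Sum>i<N. l * \<bar>c i\<bar>)"
  proof (rule sum.cong[OF refl])
    fix i
    have "(LBINT z. \<bar>c i\<bar> * indicator (I i) z) = \<bar>c i\<bar> * (LBINT z. indicator (I i) z)"
      by (rule integral_mult_right_zero)
    also have "(LBINT z. indicator (I i) z) = measure lborel (I i \<inter> space lborel)"
      using Bochner_Integration.integral_indicator[of lborel "I i"] by simp
    also have "measure lborel (I i \<inter> space lborel) = l"
      using le[of i] unfolding I_def by (simp add: algebra_simps)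
    finally show "(LBINT z. \<bar>c i\<bar> * indicator (I i) z) = l * \<bar>c i\<bar>" by simp
  qed
  finally show ?thesis by (simp add: f_def I_def)
qed


theorem proposition3p12:
  fixes v v' :: "real \<Rightarrow> real" and rho :: "real \<Rightarrow> real" and L \<delta> :: real
    and n :: nat and x :: "nat \<Rightarrow> real \<Rightarrow> real" and t s :: real
  assumes V1_deriv: "\<And>r. r \<ge> 0 \<Longrightarrow> (v has_real_derivative v' r) (at r within {0..})"
      and V1_cont: "continuous_on {0..} v'"
      and V1_decr: "\<And>a b. 0 \<le> a \<Longrightarrow> a < b \<Longrightarrow> v b < v a"
      and V3: "\<And>a b. 0 \<le> a \<Longrightarrow> a \<le> b \<Longrightarrow> b * v' b \<le> a * v' a"
      and L_pos: "L > 0"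
      and rho_meas: "rho \<in> borel_measurable lborel"
      and rho_nonneg: "\<And>y. rho y \<ge> 0"
      and rho_int: "integrable lborel rho"
      and rho_mass: "(LINT y|lborel. rho y) = L"
      and rho_Linf: "esssup lborel (\<lambda>y. ereal \<bar>rho y\<bar>) < \<infinity>"
      and rho_cpt: "bounded (msupp rho)"
      and sol: "ftl_solution v rho L n x"
      and delta_pos: "\<delta> > 0"
      and t_ge: "t \<ge> \<delta>" and s_ge: "s \<ge> \<delta>"
  shows "(LINT z:{0..L}|lborel. \<bar>rho_check L n x t z - rho_check L n x s z\<bar>)
         \<le> (Linf_norm rho)\<^sup>2 *
             ((3 * (v 0 - v (Linf_norm rho)) + 2 * (xbar_max rho - xbar_min rho) / \<delta>)
              + (v 0 - v (Linf_norm rho))) * \<bar>t - s\<bar>"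
  proof -
  interpret D: dens rho L
    using L_pos rho_meas rho_nonneg rho_int rho_mass rho_Linf rho_cpt by unfold_locales
  define N where "N = Nn n"
  define l where "l = elln L n"
  define R where "R = Linf_norm rho"
  have RR: "D.R = R" by (simp add: D.R_def R_def)
  have l: "l > 0" using L_pos by (simp add: l_def elln_def)
  have N1: "N \<ge> 1" by (simp add: N_def Nn_def)
  have x0: "\<And>i. i \<le> N \<Longrightarrow> x i 0 = xbar rho L n i"
    and ord: "\<And>t i. t \<ge> 0 \<Longrightarrow> i < N \<Longrightarrow> x i t < x (Suc i) t"
    and dN: "\<And>t. t \<ge> 0 \<Longrightarrow> (x N has_real_derivative v 0) (at t within {0..})"
    and di: "\<And>t i. t \<ge> 0 \<Longrightarrow> i < N \<Longrightarrow>
               (x i has_real_derivative v (l / (x (Suc i) t - x i t))) (at t within {0..})"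
    using sol unfolding ftl_solution_def N_def l_def by auto
  have init: "l \<le> R * (x (Suc i) 0 - x i 0)" if i: "i < N" for i
  proof -
    have "D.G (x (Suc i) 0) = real (Suc i) * l" "D.G (x i 0) = real i * l"
      using D.xbar_props[of "Suc i" n] D.xbar_props[of i n] i x0[of i] x0[of "Suc i"]
      by (auto simp: N_def l_def)
    moreover have "D.G (x (Suc i) 0) - D.G (x i 0) \<le> D.R * (x (Suc i) 0 - x i 0)"
      using ord[of 0 i] i by (intro D.G_lip) auto
    ultimately show ?thesis using RR by (simp add: algebra_simps)
  qed
  have R0: "R \<ge> 0" using D.R_facts(2) RR by simp
  have Rpos: "R > 0"
  proof (rule ccontr)
    assume "\<not> R > 0"
    hence "R = 0" using R0 by simp
    thus False using init[of 0] N1 l by simp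
  qed
  interpret F: ftl v v' x N l R
    using V1_deriv V1_decr V3 N1 l Rpos ord dN di init by unfold_locales auto
  define K where "K = 2 * (x N 0 - x 0 0) / \<delta> + 2 * (v 0 - v R)"
  have main: "(\<Sum>i<N. l * \<bar>F.y i t - F.y i s\<bar>) \<le> R^2 * K * \<bar>t - s\<bar>"
  proof (cases "s \<le> t")
    case True
    thus ?thesis using F.L1[OF delta_pos s_ge True] by (simp add: K_def)
  next
    case False
    hence "(\<Sum>i<N. l * \<bar>F.y i s - F.y i t\<bar>) \<le> R^2 * K * (s - t)"
      using F.L1[OF delta_pos t_ge] by (simp add: K_def)
    thus ?thesis using False by (simp add: abs_minus_commute)
  qed
  have yeq: "\<And>i \<tau>. F.y i \<tau> = l / (x (Suc i) \<tau> - x i \<tau>)" by (simp add: F.y_def F.d_def)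
  have eqf: "\<bar>rho_check L n x t z - rho_check L n x s z\<bar>
      = \<bar>\<Sum>i<N. (F.y i t - F.y i s) * indicator {real i * l ..< real (Suc i) * l} z\<bar>" for z
    unfolding rho_check_def ydens_def yeq N_def[symmetric] l_def[symmetric]
    by (simp add: sum_subtractf[symmetric] algebra_simps)
  have int: "(LINT z:{0..L}|lborel. \<bar>rho_check L n x t z - rho_check L n x s z\<bar>)
      \<le> (\<Sum>i<N. l * \<bar>F.y i t - F.y i s\<bar>)"
    unfolding eqf by (rule step_int[OF l])
  have xN: "x N 0 \<le> xbar_max rho" using x0[of N] D.xbar_props[of N n] by (simp add: N_def)
  have x00: "x 0 0 = xbar_min rho" using x0[of 0] by simp
  have vR: "v R \<le> v 0" using R0 by (intro F.v_mono) auto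
  have Kle: "K \<le> (3 * (v 0 - v R) + 2 * (xbar_max rho - xbar_min rho) / \<delta>) + (v 0 - v R)"
  proof -
    have "2 * (x N 0 - x 0 0) / \<delta> \<le> 2 * (xbar_max rho - xbar_min rho) / \<delta>"
      using xN x00 delta_pos by (intro divide_right_mono) auto
    thus ?thesis using vR by (simp add: K_def)
  qed
  have "R^2 * K * \<bar>t - s\<bar> \<le> R^2 * ((3 * (v 0 - v R) + 2 * (xbar_max rho - xbar_min rho) / \<delta>) + (v 0 - v R)) * \<bar>t - s\<bar>"
    using Kle by (intro mult_right_mono mult_left_mono) auto
  with int main show ?thesis unfolding R_def by linarith
qed

end
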